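(* For every integer $d\ge3$ and all $p_1,\dots,p_d\in(0,1)$, the first rencontre-time $J^d$ (see context) satisfies $E(J^d)=\infty$.
   Context: Let $d\ge2$ be an integer and $p_1,\dots,p_d\in(0,1)$. Let $\{X^j_k\}_{k\ge1}$, $j=1,\dots,d$, be independent sequences, the $j$-th consisting of i.i.d. Bernoulli random variables with success parameter $p_j$ (all $X^j_k$ mutually independent). Set $S^j(n)=\sum_{i=1}^n X^j_i$. The first rencontre-time is $J^d=\inf\{n\ge1: S^1(n)=S^2(n)=\dots=S^d(n)\}$ with $\inf\emptyset=\infty$. *)

theory Defs
  imports "HOL-Probability.Probability"
begin

text \<open>Random variables X j k (sequence index j, time index k) are boolean-valued;
  success means X j k = True. Sequences are indexed by j = 0..d-1, times by k = 1,2,...\<close>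

definition partial_count :: "(nat \<Rightarrow> nat \<Rightarrow> 'a \<Rightarrow> bool) \<Rightarrow> nat \<Rightarrow> nat \<Rightarrow> 'a \<Rightarrow> nat" where
  "partial_count X j n \<omega> = (\<Sum>i = 1..n. if X j i \<omega> then 1 else 0)"

definition rencontre_time :: "nat \<Rightarrow> (nat \<Rightarrow> nat \<Rightarrow> 'a \<Rightarrow> bool) \<Rightarrow> 'a \<Rightarrow> enat" where
  "rencontre_time d X \<omega> =
     (if \<exists>n\<ge>1. \<forall>j<d. \<forall>l<d. partial_count X j n \<omega> = partial_count X l n \<omega>
      then enat (LEAST n. n \<ge> 1 \<and> (\<forall>j<d. \<forall>l<d. partial_count X j n \<omega> = partial_count X l n \<omega>))
      else \<infinity>)"

end

theory Submission
  imports Defs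
begin


locale renc = prob_space M for M :: "'a measure" +
  fixes X :: "nat \<Rightarrow> nat \<Rightarrow> 'a \<Rightarrow> bool" and d :: nat
  assumes d2: "d \<ge> 2"
  and ind: "indep_vars (\<lambda>_. count_space UNIV) (\<lambda>(j, k). X j k) ({..<d} \<times> {1..})"
begin

definition loc :: "('a \<Rightarrow> 'b) \<Rightarrow> (nat \<times> nat) set \<Rightarrow> bool" where
  "loc g K \<longleftrightarrow> (\<forall>\<omega> \<omega>'. (\<forall>(j,k)\<in>K. X j k \<omega> = X j k \<omega>') \<longrightarrow> g \<omega> = g \<omega>')"

lemma rv_restrict:
  assumes "K \<subseteq> {..<d} \<times> {1..}"
  shows "(\<lambda>\<omega>. restrict (\<lambda>i. (\<lambda>(j, k). X j k) i \<omega>) K) \<in> measurable M (PiM K (\<lambda>_. count_space UNIV))"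
  using ind assms unfolding indep_vars_def by (auto intro!: measurable_restrict)

lemma loc_factor:
  assumes "loc g K"
  shows "g = (\<lambda>f. g (SOME \<omega>. restrict (\<lambda>i. (\<lambda>(j, k). X j k) i \<omega>) K = f)) \<circ> (\<lambda>\<omega>. restrict (\<lambda>i. (\<lambda>(j, k). X j k) i \<omega>) K)"
proof
  fix \<omega>
  let ?R = "\<lambda>\<omega>. restrict (\<lambda>i. (\<lambda>(j, k). X j k) i \<omega>) K"
  define \<omega>' where "\<omega>' = (SOME \<omega>'. ?R \<omega>' = ?R \<omega>)"
  have "?R \<omega>' = ?R \<omega>" unfolding \<omega>'_def by (rule someI) simp
  have "\<forall>(j,k)\<in>K. X j k \<omega> = X j k \<omega>'"
  proof (intro ballI, clarify)
    fix j k assume "(j,k) \<in> K"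
    from fun_cong[OF \<open>?R \<omega>' = ?R \<omega>\<close>, of "(j,k)"] \<open>(j,k) \<in> K\<close>
    show "X j k \<omega> = X j k \<omega>'" by simp
  qed
  then show "g \<omega> = ((\<lambda>f. g (SOME \<omega>. ?R \<omega> = f)) \<circ> ?R) \<omega>"
    using assms unfolding loc_def \<omega>'_def by auto
qed

lemma PiM_cs: "finite K \<Longrightarrow> PiM K (\<lambda>_. count_space (UNIV::bool set)) = count_space (PiE K (\<lambda>_. UNIV))"
  using count_space_PiM_finite[of K "\<lambda>_. UNIV::bool set"] by simp

lemma loc_meas:
  assumes "finite K" "K \<subseteq> {..<d} \<times> {1..}" "loc g K"
  shows "g \<in> measurable M (count_space UNIV)"
proof -
  have "(\<lambda>\<omega>. restrict (\<lambda>i. (\<lambda>(j, k). X j k) i \<omega>) K) \<in> measurable M (count_space (PiE K (\<lambda>_. UNIV)))"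
    using rv_restrict[OF assms(2)] PiM_cs[OF assms(1)] by simp
  then show ?thesis
    by (subst loc_factor[OF assms(3)]) (rule measurable_comp, auto)
qed

lemma loc_borel:
  assumes "finite K" "K \<subseteq> {..<d} \<times> {1..}" "loc g K"
  shows "g \<in> borel_measurable M"
proof -
  have "(\<lambda>\<omega>. restrict (\<lambda>i. (\<lambda>(j, k). X j k) i \<omega>) K) \<in> measurable M (count_space (PiE K (\<lambda>_. UNIV)))"
    using rv_restrict[OF assms(2)] PiM_cs[OF assms(1)] by simp
  then show ?thesis
    by (subst loc_factor[OF assms(3)]) (rule measurable_comp, auto)
qed

lemma loc_indep:
  assumes "finite K1" "K1 \<subseteq> {..<d} \<times> {1..}" "loc g1 K1"
    and "finite K2" "K2 \<subseteq> {..<d} \<times> {1..}" "loc g2 K2" "K1 \<inter> K2 = {}"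
  shows "indep_var borel g1 borel g2"
proof -
  have "indep_var (PiM K1 (\<lambda>_. count_space UNIV)) (\<lambda>\<omega>. restrict (\<lambda>i. (\<lambda>(j, k). X j k) i \<omega>) K1)
     (PiM K2 (\<lambda>_. count_space UNIV)) (\<lambda>\<omega>. restrict (\<lambda>i. (\<lambda>(j, k). X j k) i \<omega>) K2)"
    using indep_var_restrict[OF ind assms(7,2,5)] .
  then have "indep_var (count_space (PiE K1 (\<lambda>_. UNIV))) (\<lambda>\<omega>. restrict (\<lambda>i. (\<lambda>(j, k). X j k) i \<omega>) K1)
     (count_space (PiE K2 (\<lambda>_. UNIV))) (\<lambda>\<omega>. restrict (\<lambda>i. (\<lambda>(j, k). X j k) i \<omega>) K2)"
    using PiM_cs[OF assms(1)] PiM_cs[OF assms(4)] by simp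
  then have "indep_var borel ((\<lambda>f. g1 (SOME \<omega>. restrict (\<lambda>i. (\<lambda>(j, k). X j k) i \<omega>) K1 = f)) \<circ> (\<lambda>\<omega>. restrict (\<lambda>i. (\<lambda>(j, k). X j k) i \<omega>) K1))
     borel ((\<lambda>f. g2 (SOME \<omega>. restrict (\<lambda>i. (\<lambda>(j, k). X j k) i \<omega>) K2 = f)) \<circ> (\<lambda>\<omega>. restrict (\<lambda>i. (\<lambda>(j, k). X j k) i \<omega>) K2))"
    by (rule indep_var_compose) auto
  then show ?thesis using loc_factor[OF assms(3)] loc_factor[OF assms(6)] by simp
qed

lemma loc_indep_int:
  fixes g1 g2 :: "'a \<Rightarrow> real"
  assumes "finite K1" "K1 \<subseteq> {..<d} \<times> {1..}" "loc g1 K1"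
    and "finite K2" "K2 \<subseteq> {..<d} \<times> {1..}" "loc g2 K2" "K1 \<inter> K2 = {}"
    and "\<And>\<omega>. \<bar>g1 \<omega>\<bar> \<le> B1" "\<And>\<omega>. \<bar>g2 \<omega>\<bar> \<le> B2"
  shows "(\<integral>\<omega>. g1 \<omega> * g2 \<omega> \<partial>M) = (\<integral>\<omega>. g1 \<omega> \<partial>M) * (\<integral>\<omega>. g2 \<omega> \<partial>M)"
proof (rule indep_var_lebesgue_integral)
  show "indep_var borel g1 borel g2" by (rule loc_indep[OF assms(1-7)])
  show "integrable M g1"
    by (rule integrable_const_bound[where B=B1]) (use assms loc_borel in auto)
  show "integrable M g2"
    by (rule integrable_const_bound[where B=B2]) (use assms loc_borel in auto)
qed

lemma loc_mono: "loc g K \<Longrightarrow> K \<subseteq> K' \<Longrightarrow> loc g K'"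
  unfolding loc_def by blast

lemma loc_comp: "loc g K \<Longrightarrow> loc (\<lambda>\<omega>. f (g \<omega>)) K"
  unfolding loc_def by metis

lemma loc_comp2: "loc g K \<Longrightarrow> loc h K \<Longrightarrow> loc (\<lambda>\<omega>. f (g \<omega>) (h \<omega>)) K"
  unfolding loc_def by metis

lemma int_bdd:
  fixes g :: "'a \<Rightarrow> real"
  assumes "finite K" "K \<subseteq> {..<d} \<times> {1..}" "loc g K" "\<And>\<omega>. \<bar>g \<omega>\<bar> \<le> B"
  shows "integrable M g"
  by (rule integrable_const_bound[where B=B]) (use assms loc_borel in auto)

definition xi :: "nat \<Rightarrow> 'a \<Rightarrow> real" where
  "xi t \<omega> = (if X 0 t \<omega> then 1 else 0) - (if X 1 t \<omega> then 1 else 0)"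

definition D :: "nat \<Rightarrow> 'a \<Rightarrow> real" where
  "D t \<omega> = (\<Sum>i\<in>{1..t}. xi i \<omega>)"

definition Ev :: "nat \<Rightarrow> 'a \<Rightarrow> bool" where
  "Ev t \<omega> \<longleftrightarrow> (\<forall>i\<in>{1..t}. D i \<omega> \<noteq> 0)"

definition KK :: "nat \<Rightarrow> (nat \<times> nat) set" where
  "KK t = {0,1} \<times> {1..t}"

lemma KK_fin: "finite (KK t)" unfolding KK_def by auto
lemma KK_sub: "KK t \<subseteq> {..<d} \<times> {1..}" using d2 unfolding KK_def by auto

lemma xi_bdd: "\<bar>xi t \<omega>\<bar> \<le> 1" unfolding xi_def by auto

lemma D_bdd: "\<bar>D t \<omega>\<bar> \<le> real t"
proof -
  have "\<bar>D t \<omega>\<bar> \<le> (\<Sum>i\<in>{1..t}. \<bar>xi i \<omega>\<bar>)" unfolding D_def by (rule sum_abs)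
  also have "\<dots> \<le> (\<Sum>i\<in>{1..t}. 1)" by (rule sum_mono) (rule xi_bdd)
  finally show ?thesis by simp
qed

lemma loc_xi: "loc (xi t) {(0,t),(1,t)}"
  unfolding loc_def xi_def by auto

lemma loc_xi': "1 \<le> t \<Longrightarrow> t \<le> n \<Longrightarrow> loc (xi t) (KK n)"
  by (rule loc_mono[OF loc_xi]) (auto simp: KK_def)

lemma loc_D: "loc (D t) (KK t)"
  unfolding loc_def
proof (intro allI impI)
  fix \<omega> \<omega>' assume h: "\<forall>(j, k)\<in>KK t. X j k \<omega> = X j k \<omega>'"
  have "xi i \<omega> = xi i \<omega>'" if "i \<in> {1..t}" for i
    using loc_xi'[of i t] that h unfolding loc_def by auto
  then show "D t \<omega> = D t \<omega>'" unfolding D_def by (rule sum.cong[OF refl])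
qed

lemma loc_Ev: "loc (Ev t) (KK t)"
  unfolding loc_def
proof (intro allI impI)
  fix \<omega> \<omega>' assume h: "\<forall>(j, k)\<in>KK t. X j k \<omega> = X j k \<omega>'"
  have "D i \<omega> = D i \<omega>'" if "i \<in> {1..t}" for i
  proof -
    have "KK i \<subseteq> KK t" using that by (auto simp: KK_def)
    then have "loc (D i) (KK t)" by (rule loc_mono[OF loc_D])
    then show ?thesis using h unfolding loc_def by blast
  qed
  then show "Ev t \<omega> = Ev t \<omega>'" unfolding Ev_def by auto
qed

lemma int_Xind:
  "(\<integral>\<omega>. (if X j k \<omega> then 1 else 0) \<partial>M) = measure M {\<omega> \<in> space M. X j k \<omega>}"
proof -
  have "(\<lambda>\<omega>. (if X j k \<omega> then 1 else 0)::real) = indicator {\<omega>. X j k \<omega>}"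
    by (auto simp: indicator_def)
  then show ?thesis by (simp add: Int_def conj_commute)
qed

end


locale renc2 = renc +
  fixes p :: "nat \<Rightarrow> real"
  assumes p0: "0 < p 0" "p 0 < 1" and p1: "0 < p 1" "p 1 < 1"
  and pm: "\<And>j k. j < 2 \<Longrightarrow> 1 \<le> k \<Longrightarrow> measure M {\<omega> \<in> space M. X j k \<omega>} = p j"
begin

definition bb :: bool where "bb = (p 1 \<le> p 0)"
definition ss :: real where "ss = (if bb then 1 else -1)"
definition ind01 :: "'a \<Rightarrow> real" where
  "ind01 \<omega> = (if X 0 1 \<omega> = bb \<and> X 1 1 \<omega> = (\<not> bb) then 1 else 0)"
definition evi :: "nat \<Rightarrow> 'a \<Rightarrow> real" where
  "evi t \<omega> = (if Ev t \<omega> then 1 else 0)"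
definition Z :: "nat \<Rightarrow> 'a \<Rightarrow> real" where
  "Z t \<omega> = ss * D t \<omega> * evi t \<omega>"

lemma loc_ind01: "1 \<le> t \<Longrightarrow> loc ind01 (KK t)"
  by (rule loc_mono[of _ "{(0,1),(1,1)}"]) (auto simp: loc_def ind01_def KK_def)

lemma loc_evi: "loc (evi t) (KK t)"
  unfolding evi_def by (rule loc_comp[OF loc_Ev])

lemma loc_Z: "loc (Z t) (KK t)"
  unfolding Z_def by (rule loc_comp2[OF loc_D loc_evi])

lemma ss_sq: "ss * ss = 1" by (simp add: ss_def)
lemma ss_abs: "\<bar>ss\<bar> = 1" by (simp add: ss_def)

lemma bnd_ind01: "\<bar>ind01 \<omega>\<bar> \<le> 1" by (simp add: ind01_def)
lemma bnd_evi: "\<bar>evi t \<omega>\<bar> \<le> 1" by (simp add: evi_def)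
lemma bnd_Z: "\<bar>Z t \<omega>\<bar> \<le> real t"
proof -
  have "\<bar>Z t \<omega>\<bar> = \<bar>D t \<omega>\<bar> * \<bar>evi t \<omega>\<bar>" by (simp add: Z_def abs_mult ss_abs)
  also have "\<dots> \<le> real t * 1"
    by (rule mult_mono) (auto simp: D_bdd bnd_evi)
  finally show ?thesis by simp
qed

lemma bnd_indZ: "\<bar>ind01 \<omega> * Z t \<omega>\<bar> \<le> real t"
  using bnd_Z[of t \<omega>] by (simp add: ind01_def)

lemma int_xi: "1 \<le> k \<Longrightarrow> (\<integral>\<omega>. xi k \<omega> \<partial>M) = p 0 - p 1"
proof -
  assume k: "1 \<le> k"
  have i: "integrable M (\<lambda>\<omega>. (if X j k \<omega> then 1 else 0)::real)" if "j < 2" for j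
    by (rule int_bdd[where K="{(j,k)}" and B=1]) (use k that d2 in \<open>auto simp: loc_def\<close>)
  show ?thesis unfolding xi_def
    by (subst Bochner_Integration.integral_diff) (use i int_Xind pm k in auto)
qed

lemma step_le:
  assumes t: "1 \<le> t"
  shows "(\<integral>\<omega>. ind01 \<omega> * Z t \<omega> \<partial>M) \<le> (\<integral>\<omega>. ind01 \<omega> * Z (Suc t) \<omega> \<partial>M)"
proof -
  have pw: "ind01 \<omega> * Z (Suc t) \<omega> = ind01 \<omega> * Z t \<omega> + ss * ((ind01 \<omega> * evi t \<omega>) * xi (Suc t) \<omega>)" for \<omega>
  proof -
    have DS: "D (Suc t) \<omega> = D t \<omega> + xi (Suc t) \<omega>" unfolding D_def by simp
    have ES: "Ev (Suc t) \<omega> \<longleftrightarrow> Ev t \<omega> \<and> D (Suc t) \<omega> \<noteq> 0"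
    proof -
      have "{1..Suc t} = insert (Suc t) {1..t}" by auto
      then show ?thesis unfolding Ev_def by auto
    qed
    have xiS: "xi (Suc t) \<omega> = D (Suc t) \<omega> - D t \<omega>" using DS by simp
    show ?thesis unfolding Z_def evi_def xiS using ES by (auto simp: algebra_simps)
  qed
  have i1: "integrable M (\<lambda>\<omega>. ind01 \<omega> * Z t \<omega>)"
    by (rule int_bdd[where K="KK t" and B="real t"]) (rule KK_fin, rule KK_sub,
        rule loc_comp2[OF loc_ind01[OF t] loc_Z, where f="(*)"], rule bnd_indZ)
  have l2: "loc (\<lambda>\<omega>. ind01 \<omega> * evi t \<omega>) (KK t)"
    by (rule loc_comp2[OF loc_ind01[OF t] loc_evi, where f="(*)"])
  have b2: "\<bar>ind01 \<omega> * evi t \<omega>\<bar> \<le> 1" for \<omega>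
    by (simp add: ind01_def evi_def)
  have i2: "integrable M (\<lambda>\<omega>. ss * ((ind01 \<omega> * evi t \<omega>) * xi (Suc t) \<omega>))"
  proof (rule integrable_mult_right)
    show "integrable M (\<lambda>\<omega>. ind01 \<omega> * evi t \<omega> * xi (Suc t) \<omega>)"
    proof (rule int_bdd[where K="KK (Suc t)" and B=1])
      have "KK t \<subseteq> KK (Suc t)" by (auto simp: KK_def)
      then have "loc (\<lambda>\<omega>. ind01 \<omega> * evi t \<omega>) (KK (Suc t))" by (rule loc_mono[OF l2])
      then show "loc (\<lambda>\<omega>. ind01 \<omega> * evi t \<omega> * xi (Suc t) \<omega>) (KK (Suc t))"
        by (rule loc_comp2[OF _ loc_xi'[of "Suc t" "Suc t"], where f="(*)"]) simp_all
      show "finite (KK (Suc t))" by (rule KK_fin)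
      show "KK (Suc t) \<subseteq> {..<d} \<times> {1..}" by (rule KK_sub)
      show "\<bar>ind01 \<omega> * evi t \<omega> * xi (Suc t) \<omega>\<bar> \<le> 1" for \<omega>
        by (simp add: xi_def ind01_def evi_def)
    qed
  qed
  have indep: "(\<integral>\<omega>. (ind01 \<omega> * evi t \<omega>) * xi (Suc t) \<omega> \<partial>M)
      = (\<integral>\<omega>. ind01 \<omega> * evi t \<omega> \<partial>M) * (\<integral>\<omega>. xi (Suc t) \<omega> \<partial>M)"
    by (rule loc_indep_int[OF KK_fin KK_sub l2 _ _ loc_xi _ b2 xi_bdd])
       (use d2 in \<open>auto simp: KK_def\<close>)
  have nn: "0 \<le> (\<integral>\<omega>. ind01 \<omega> * evi t \<omega> \<partial>M)"
    by (rule integral_nonneg_AE) (auto simp: ind01_def evi_def)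
  have sp: "0 \<le> ss * (p 0 - p 1)" by (auto simp: ss_def bb_def)
  have "(\<integral>\<omega>. ind01 \<omega> * Z (Suc t) \<omega> \<partial>M) = (\<integral>\<omega>. ind01 \<omega> * Z t \<omega> \<partial>M)
        + ss * ((\<integral>\<omega>. ind01 \<omega> * evi t \<omega> \<partial>M) * (p 0 - p 1))"
    unfolding pw
    by (subst Bochner_Integration.integral_add[OF i1 i2]) (simp add: indep int_xi)
  also have "\<dots> \<ge> (\<integral>\<omega>. ind01 \<omega> * Z t \<omega> \<partial>M)"
    using mult_nonneg_nonneg[OF nn sp] by (simp add: algebra_simps)
  finally show ?thesis by simp
qed

lemma base_eq: "(\<integral>\<omega>. ind01 \<omega> * Z 1 \<omega> \<partial>M) = (\<integral>\<omega>. ind01 \<omega> \<partial>M)"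
proof (rule Bochner_Integration.integral_cong[OF refl])
  fix \<omega>
  have D1: "D 1 \<omega> = xi 1 \<omega>" unfolding D_def by simp
  have E1: "Ev 1 \<omega> \<longleftrightarrow> D 1 \<omega> \<noteq> 0" unfolding Ev_def by simp
  show "ind01 \<omega> * Z 1 \<omega> = ind01 \<omega>"
    unfolding Z_def evi_def E1 D1 by (auto simp: ind01_def xi_def ss_def)
qed

lemma lower: "1 \<le> t \<Longrightarrow> (\<integral>\<omega>. ind01 \<omega> \<partial>M) \<le> (\<integral>\<omega>. ind01 \<omega> * Z t \<omega> \<partial>M)"
proof (induction t rule: dec_induct)
  case base
  then show ?case using base_eq by simp
next
  case (step n)
  then show ?case using step_le[of n] by linarith
qed

lemma int_evi: "(\<integral>\<omega>. evi t \<omega> \<partial>M) = measure M {\<omega> \<in> space M. Ev t \<omega>}"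
proof -
  have "evi t = indicator {\<omega>. Ev t \<omega>}"
    by (auto simp: indicator_def evi_def)
  then show ?thesis by (simp add: Int_def conj_commute)
qed

lemma upper: "1 \<le> t \<Longrightarrow> (\<integral>\<omega>. ind01 \<omega> * Z t \<omega> \<partial>M) \<le> real t * measure M {\<omega> \<in> space M. Ev t \<omega>}"
proof -
  assume t: "1 \<le> t"
  have i1: "integrable M (\<lambda>\<omega>. ind01 \<omega> * Z t \<omega>)"
    by (rule int_bdd[where K="KK t" and B="real t"]) (rule KK_fin, rule KK_sub,
        rule loc_comp2[OF loc_ind01[OF t] loc_Z, where f="(*)"], rule bnd_indZ)
  have i2: "integrable M (evi t)"
    by (rule int_bdd[where K="KK t" and B=1]) (rule KK_fin, rule KK_sub, rule loc_evi, rule bnd_evi)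
  have "(\<integral>\<omega>. ind01 \<omega> * Z t \<omega> \<partial>M) \<le> (\<integral>\<omega>. real t * evi t \<omega> \<partial>M)"
  proof (rule integral_mono[OF i1 integrable_mult_right[OF i2]])
    fix \<omega>
    have "ind01 \<omega> * Z t \<omega> \<le> \<bar>ind01 \<omega> * Z t \<omega>\<bar>" by simp
    also have "\<dots> \<le> \<bar>D t \<omega>\<bar> * evi t \<omega>"
      by (simp add: Z_def ind01_def evi_def abs_mult ss_abs)
    also have "\<dots> \<le> real t * evi t \<omega>"
      by (rule mult_right_mono[OF D_bdd]) (simp add: evi_def)
    finally show "ind01 \<omega> * Z t \<omega> \<le> real t * evi t \<omega>" .
  qed
  then show ?thesis by (simp add: int_evi)
qed

lemma pos: "0 < (\<integral>\<omega>. ind01 \<omega> \<partial>M)"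
proof -
  define g1 where "g1 \<omega> = (if X 0 1 \<omega> = bb then 1 else 0::real)" for \<omega>
  define g2 where "g2 \<omega> = (if X 1 1 \<omega> = (\<not> bb) then 1 else 0::real)" for \<omega>
  have e: "ind01 \<omega> = g1 \<omega> * g2 \<omega>" for \<omega> by (simp add: ind01_def g1_def g2_def)
  have "(\<integral>\<omega>. g1 \<omega> * g2 \<omega> \<partial>M) = (\<integral>\<omega>. g1 \<omega> \<partial>M) * (\<integral>\<omega>. g2 \<omega> \<partial>M)"
  proof (rule loc_indep_int)
    show "loc g1 {(0,1)}" by (auto simp: loc_def g1_def)
    show "loc g2 {(1,1)}" by (auto simp: loc_def g2_def)
    show "\<bar>g1 \<omega>\<bar> \<le> 1" for \<omega> by (simp add: g1_def)
    show "\<bar>g2 \<omega>\<bar> \<le> 1" for \<omega> by (simp add: g2_def)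
  qed (use d2 in auto)
  moreover
  have gen: "0 < (\<integral>\<omega>. (if X j 1 \<omega> = c then 1 else 0::real) \<partial>M)" if "j < 2" "0 < p j" "p j < 1" for j c
  proof -
    have i: "integrable M (\<lambda>\<omega>. (if X j 1 \<omega> then 1 else 0)::real)"
      by (rule int_bdd[where K="{(j,1)}" and B=1]) (use that d2 in \<open>auto simp: loc_def\<close>)
    have v: "(\<integral>\<omega>. (if X j 1 \<omega> then 1 else 0::real) \<partial>M) = p j"
      using int_Xind pm that by auto
    show ?thesis
    proof (cases c)
      case True
      then show ?thesis using v that by simp
    next
      case False
      have "(\<lambda>\<omega>. (if X j 1 \<omega> = c then 1 else 0::real)) = (\<lambda>\<omega>. 1 - (if X j 1 \<omega> then 1 else 0))"
        using False by auto
      then show ?thesis using v that i by (simp add: Bochner_Integration.integral_diff prob_space)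
    qed
  qed
  have "0 < (\<integral>\<omega>. g1 \<omega> \<partial>M)" unfolding g1_def by (rule gen) (use p0 in auto)
  moreover have "0 < (\<integral>\<omega>. g2 \<omega> \<partial>M)" unfolding g2_def by (rule gen) (use p1 in auto)
  ultimately show ?thesis by (simp add: e)
qed

lemma key: "1 \<le> t \<Longrightarrow> (\<integral>\<omega>. ind01 \<omega> \<partial>M) / real t \<le> measure M {\<omega> \<in> space M. Ev t \<omega>}"
  using lower[of t] upper[of t] by (simp add: divide_le_eq mult.commute)

lemma D_pc: "D n \<omega> = real (partial_count X 0 n \<omega>) - real (partial_count X 1 n \<omega>)"
proof -
  have "D n \<omega> = (\<Sum>i=1..n. (if X 0 i \<omega> then 1 else 0::real)) - (\<Sum>i=1..n. (if X 1 i \<omega> then 1 else 0::real))"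
    unfolding D_def xi_def by (rule sum_subtractf)
  moreover have h: "\<And>b. real (if b then 1 else 0::nat) = (if b then 1 else 0)" by simp
  ultimately show ?thesis unfolding partial_count_def of_nat_sum h by simp
qed

lemma Ev_lt:
  assumes "Ev t \<omega>"
  shows "enat t < rencontre_time d X \<omega>"
proof (cases "\<exists>n\<ge>1. \<forall>j<d. \<forall>l<d. partial_count X j n \<omega> = partial_count X l n \<omega>")
  case False
  have "rencontre_time d X \<omega> = \<infinity>" unfolding rencontre_time_def by (rule if_not_P[OF False])
  then show ?thesis by simp
next
  case True
  let ?P = "\<lambda>n. n \<ge> 1 \<and> (\<forall>j<d. \<forall>l<d. partial_count X j n \<omega> = partial_count X l n \<omega>)"
  have P: "?P (LEAST n. ?P n)" using True by (rule LeastI_ex)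
  have "t < (LEAST n. ?P n)"
  proof (rule ccontr)
    assume "\<not> t < (LEAST n. ?P n)"
    then have le: "(LEAST n. ?P n) \<in> {1..t}" using P by auto
    have "partial_count X 0 (LEAST n. ?P n) \<omega> = partial_count X 1 (LEAST n. ?P n) \<omega>"
      using P d2 by auto
    then have "D (LEAST n. ?P n) \<omega> = 0" by (simp add: D_pc)
    then show False using assms le unfolding Ev_def by blast
  qed
  then show ?thesis using True unfolding rencontre_time_def by simp
qed

definition Evset :: "nat \<Rightarrow> 'a set" where "Evset t = {\<omega> \<in> space M. Ev t \<omega>}"

lemma Evset_sets: "Evset t \<in> sets M"
proof -
  have "Ev t -` {True} \<inter> space M \<in> sets M"
    by (rule measurable_sets[OF loc_meas[OF KK_fin KK_sub loc_Ev]]) simp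
  moreover have "Ev t -` {True} \<inter> space M = Evset t" by (auto simp: Evset_def)
  ultimately show ?thesis by simp
qed

lemma pw_sum: "(\<Sum>t\<in>{1..N}. indicator (Evset t) \<omega> :: ennreal) \<le> ennreal_of_enat (rencontre_time d X \<omega>)"
proof -
  let ?S = "{1..N} \<inter> {t. \<omega> \<in> Evset t}"
  have "(\<Sum>t\<in>{1..N}. indicator (Evset t) \<omega> :: ennreal) = (\<Sum>t\<in>?S. 1)"
    by (simp add: sum.inter_filter indicator_def)
  also have "\<dots> = of_nat (card ?S)" by simp
  also have "\<dots> \<le> ennreal_of_enat (rencontre_time d X \<omega>)"
  proof (cases "rencontre_time d X \<omega>")
    case (enat k)
    have "?S \<subseteq> {1..<k}"
    proof
      fix t assume "t \<in> ?S"
      then have "enat t < enat k" using Ev_lt[of t \<omega>] enat by (auto simp: Evset_def)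
      then show "t \<in> {1..<k}" using \<open>t \<in> ?S\<close> by auto
    qed
    then have "card ?S \<le> k" using card_mono[of "{1..<k}" ?S] by auto
    then show ?thesis using enat by (simp add: of_nat_mono)
  next
    case infinity
    then show ?thesis by simp
  qed
  finally show ?thesis .
qed

lemma main_bound: "ennreal ((\<integral>\<omega>. ind01 \<omega> \<partial>M) * harm N) \<le> (\<integral>\<^sup>+ \<omega>. ennreal_of_enat (rencontre_time d X \<omega>) \<partial>M)"
proof -
  let ?c = "(\<integral>\<omega>. ind01 \<omega> \<partial>M)"
  have "ennreal (?c * harm N) = ennreal (\<Sum>t\<in>{1..N}. ?c / real t)"
    by (simp add: harm_def sum_distrib_left divide_inverse)
  also have "\<dots> = (\<Sum>t\<in>{1..N}. ennreal (?c / real t))"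
    using pos by (intro sum_ennreal[symmetric]) auto
  also have "\<dots> \<le> (\<Sum>t\<in>{1..N}. ennreal (measure M (Evset t)))"
    by (intro sum_mono ennreal_leI) (auto simp: key Evset_def)
  also have "\<dots> = (\<Sum>t\<in>{1..N}. emeasure M (Evset t))"
    by (simp add: emeasure_eq_measure)
  also have "\<dots> = (\<Sum>t\<in>{1..N}. \<integral>\<^sup>+ \<omega>. indicator (Evset t) \<omega> \<partial>M)"
    by (simp add: Evset_sets)
  also have "\<dots> = (\<integral>\<^sup>+ \<omega>. (\<Sum>t\<in>{1..N}. indicator (Evset t) \<omega>) \<partial>M)"
    by (rule nn_integral_sum[symmetric]) (auto intro!: borel_measurable_indicator Evset_sets)
  also have "\<dots> \<le> (\<integral>\<^sup>+ \<omega>. ennreal_of_enat (rencontre_time d X \<omega>) \<partial>M)"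
    by (rule nn_integral_mono) (rule pw_sum)
  finally show ?thesis .
qed

lemma final: "(\<integral>\<^sup>+ \<omega>. ennreal_of_enat (rencontre_time d X \<omega>) \<partial>M) = \<infinity>"
proof (rule ccontr)
  let ?c = "(\<integral>\<omega>. ind01 \<omega> \<partial>M)"
  let ?I = "(\<integral>\<^sup>+ \<omega>. ennreal_of_enat (rencontre_time d X \<omega>) \<partial>M)"
  assume "?I \<noteq> \<infinity>"
  then obtain r where r: "?I = ennreal r" "0 \<le> r" by (cases ?I) auto
  define N where "N = nat \<lceil>exp (r / ?c)\<rceil>"
  have "exp (r / ?c) \<le> real N" unfolding N_def by linarith
  then have "r / ?c < ln (real N + 1)"
    by (smt (verit, best) exp_gt_zero ln_exp ln_less_cancel_iff)
  also have "\<dots> \<le> harm N" by (rule ln_le_harm)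
  finally have "r < ?c * harm N" using pos by (simp add: divide_less_eq mult.commute)
  moreover have "ennreal (?c * harm N) \<le> ennreal r" using main_bound r by simp
  then have "?c * harm N \<le> r" using r(2) by (simp add: ennreal_le_iff)
  ultimately show False by simp
qed

end

theorem theorem10:
  fixes M :: "'a measure" and d :: nat and p :: "nat \<Rightarrow> real"
    and X :: "nat \<Rightarrow> nat \<Rightarrow> 'a \<Rightarrow> bool"
  assumes "prob_space M"
    and "d \<ge> 3"
    and "\<forall>j<d. 0 < p j \<and> p j < 1"
    and "prob_space.indep_vars M (\<lambda>_. count_space UNIV) (\<lambda>(j, k). X j k) ({..<d} \<times> {1..})"
    and "\<forall>j<d. \<forall>k\<ge>1. measure M {\<omega> \<in> space M. X j k \<omega>} = p j"
  shows "(\<integral>\<^sup>+ \<omega>. ennreal_of_enat (rencontre_time d X \<omega>) \<partial>M) = \<infinity>"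
proof -
  interpret P: prob_space M by (rule assms(1))
  interpret R: renc2 M X d p
  proof unfold_locales
    show "2 \<le> d" using assms(2) by simp
    show "P.indep_vars (\<lambda>_. count_space UNIV) (\<lambda>(j, k). X j k) ({..<d} \<times> {1..})" by (rule assms(4))
    show "0 < p 0" "p 0 < 1" "0 < p 1" "p 1 < 1" using assms(2,3) by auto
    show "measure M {\<omega> \<in> space M. X j k \<omega>} = p j" if "j < 2" "1 \<le> k" for j k
      using assms(2,5) that by auto
  qed
  show ?thesis by (rule R.final)
qed

end
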